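(* Let $I$ be an ideal on a cardinal $\kappa$ and $\theta$ a regular cardinal. The following are equivalent: (1) $I$ is weakly $\theta$-saturated and $\theta$-indecomposable. (2) Whenever $\langle B_i:i<\theta\rangle$ is a $\subseteq$-increasing sequence of subsets of $\kappa$, there is $i^*<\theta$ such that $B_i=_I\bigcup_{j<\theta}B_j$ for all $i$ with $i^*\leq i<\theta$. (3) Whenever $\langle A_i:i<\theta\rangle$ is a sequence of $I$-positive subsets of $\kappa$, $\bigcap_{i<\theta}\bigcup_{i\leq j<\theta}A_j\neq\emptyset$.
   Context: By an ideal on a cardinal $\kappa$ we mean a proper ideal on $\kappa$ containing all bounded subsets of $\kappa$. $I$-positive means not in $I$; $A=_I B$ means $A\setminus B,B\setminus A\in I$. $I$ is weakly $\theta$-saturated if there is no partition of $\kappa$ into $\theta$ pairwise disjoint $I$-positive sets. $I$ is $\theta$-indecomposable if whenever $\langle A_i:i<\theta\rangle$ are subsets of $\kappa$ with $\bigcup_{i<\theta}A_i\notin I$, there is $w\subseteq\theta$ with $|w|<\theta$ and $\bigcup_{i\in w}A_i\notin I$. *)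

theory Defs
  imports Main
begin

text \<open>A cardinal \<kappa> is represented by a cardinal-order relation r (the well-order of the
initial ordinal), with \<kappa> = Field r.  Subsets of \<kappa> are subsets of Field r.\<close>

definition bounded_in :: "'a rel \<Rightarrow> 'a set \<Rightarrow> bool" where
  "bounded_in r A \<longleftrightarrow> (\<exists>\<alpha>\<in>Field r. A \<subseteq> underS r \<alpha>)"

definition ideal_on :: "'a rel \<Rightarrow> 'a set set \<Rightarrow> bool" where
  "ideal_on r I \<longleftrightarrow>
     I \<subseteq> Pow (Field r) \<and>
     {} \<in> I \<and>
     (\<forall>A\<in>I. \<forall>B. B \<subseteq> A \<longrightarrow> B \<in> I) \<and>
     (\<forall>A\<in>I. \<forall>B\<in>I. A \<union> B \<in> I) \<and>
     Field r \<notin> I \<and>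
     (\<forall>A. A \<subseteq> Field r \<and> bounded_in r A \<longrightarrow> A \<in> I)"

definition I_positive :: "'a rel \<Rightarrow> 'a set set \<Rightarrow> 'a set \<Rightarrow> bool" where
  "I_positive r I A \<longleftrightarrow> A \<subseteq> Field r \<and> A \<notin> I"

definition I_eq :: "'a set set \<Rightarrow> 'a set \<Rightarrow> 'a set \<Rightarrow> bool" where
  "I_eq I A B \<longleftrightarrow> A - B \<in> I \<and> B - A \<in> I"

definition weakly_saturated :: "'a rel \<Rightarrow> 'a set set \<Rightarrow> 'b rel \<Rightarrow> bool" where
  "weakly_saturated r I t \<longleftrightarrow>
     \<not> (\<exists>P :: 'b \<Rightarrow> 'a set.
          (\<forall>i\<in>Field t. I_positive r I (P i)) \<and>
          (\<forall>i\<in>Field t. \<forall>j\<in>Field t. i \<noteq> j \<longrightarrow> P i \<inter> P j = {}) \<and>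
          (\<Union>i\<in>Field t. P i) = Field r)"

definition indecomposable :: "'a rel \<Rightarrow> 'a set set \<Rightarrow> 'b rel \<Rightarrow> bool" where
  "indecomposable r I t \<longleftrightarrow>
     (\<forall>A :: 'b \<Rightarrow> 'a set.
        (\<forall>i\<in>Field t. A i \<subseteq> Field r) \<and> (\<Union>i\<in>Field t. A i) \<notin> I \<longrightarrow>
        (\<exists>w. w \<subseteq> Field t \<and> (card_of w, t) \<in> ordLess \<and> (\<Union>i\<in>w. A i) \<notin> I))"

end

theory Submission imports Defs begin
unbundle cardinal_syntax

lemma t_wo: "Card_order t \<Longrightarrow> Well_order t"
  by (simp add: card_order_on_def)

lemma t_refl: "Card_order t \<Longrightarrow> i \<in> Field t \<Longrightarrow> (i,i) \<in> t"
  by (metis t_wo order_on_defs(1,2,3) refl_onD wo_rel.REFL wo_rel_def)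

lemma t_trans: "Card_order t \<Longrightarrow> (i,j) \<in> t \<Longrightarrow> (j,k) \<in> t \<Longrightarrow> (i,k) \<in> t"
  by (metis t_wo wo_rel.TRANS wo_rel_def transE)

lemma t_total: "Card_order t \<Longrightarrow> i \<in> Field t \<Longrightarrow> j \<in> Field t \<Longrightarrow> (i,j) \<in> t \<or> (j,i) \<in> t"
  by (metis t_wo wo_rel.TOTALS wo_rel_def)

lemma t_nomax: "Card_order t \<Longrightarrow> Cinfinite t \<Longrightarrow> i \<in> Field t \<Longrightarrow> \<exists>j\<in>Field t. (i,j) \<in> t \<and> j \<noteq> i"
  using infinite_Card_order_limit unfolding cinfinite_def by fastforce

lemma t_bounded: assumes "Card_order t" "regularCard t" "K \<subseteq> Field t" "|K| <o t" "Field t \<noteq> {}"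
  shows "\<exists>a\<in>Field t. \<forall>k\<in>K. (k,a) \<in> t"
proof -
  have "\<not> cofinal K t"
  proof
    assume "cofinal K t"
    then have "|K| =o t" using assms(2,3) unfolding regularCard_def by blast
    then show False using not_ordLess_ordIso[OF assms(4)] by simp
  qed
  then obtain a where a: "a \<in> Field t" "\<forall>b\<in>K. a = b \<or> (a,b) \<notin> t"
    unfolding cofinal_def by blast
  show ?thesis
  proof (intro bexI[OF _ a(1)] ballI)
    fix k assume k: "k \<in> K"
    then have kf: "k \<in> Field t" using assms(3) by blast
    show "(k,a) \<in> t"
    proof (cases "a = k")
      case True then show ?thesis using t_refl[OF assms(1) kf] by simp
    next
      case False
      then have "(a,k) \<notin> t" using a(2) k by blast
      then show ?thesis using t_total[OF assms(1) kf a(1)] by blast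
    qed
  qed
qed

lemma t_initial: assumes "Card_order t" "Cinfinite t" "i \<in> Field t"
  shows "|{j\<in>Field t. (j,i) \<in> t}| <o t"
proof -
  have eq: "{j\<in>Field t. (j,i) \<in> t} = underS t i \<union> {i}"
    using assms(3) t_refl[OF assms(1) assms(3)] by (auto simp: underS_def intro: FieldI1)
  have ft: "|Field t| =o t" using card_of_Field_ordIso assms(1) by blast
  have inf: "\<not> finite (Field t)" using assms(2) unfolding cinfinite_def by blast
  have 1: "|underS t i| <o |Field t|"
    using ordLess_ordIso_trans[OF card_of_underS[OF assms(1,3)] ordIso_symmetric[OF ft]] .
  have 2: "|{i}| <o |Field t|"
    using finite_ordLess_infinite[of "|{i}|" "|Field t|"] inf by (simp add: card_of_Well_order Field_card_of card_of_well_order_on)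
  have X: "|underS t i \<union> {i}| <o t"
    using ordLess_ordIso_trans[OF card_of_Un_ordLess_infinite[OF inf 1 2] ft] .
  show ?thesis unfolding eq by (rule X)
qed

lemma ideal_parts: assumes "ideal_on r I"
  shows "{} \<in> I" "\<forall>A\<in>I. \<forall>B. B \<subseteq> A \<longrightarrow> B \<in> I" "\<forall>A\<in>I. \<forall>B\<in>I. A \<union> B \<in> I"
  using assms by (simp_all add: ideal_on_def)
lemma ideal_sub: "ideal_on r I \<Longrightarrow> A \<in> I \<Longrightarrow> B \<subseteq> A \<Longrightarrow> B \<in> I"
  using ideal_parts(2) by blast
lemma ideal_un: "ideal_on r I \<Longrightarrow> A \<in> I \<Longrightarrow> B \<in> I \<Longrightarrow> A \<union> B \<in> I"
  using ideal_parts(3) by blast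
lemma ideal_empty: "ideal_on r I \<Longrightarrow> {} \<in> I"
  using ideal_parts(1) by blast

lemma key:
  assumes tc: "Card_order t" and ti: "Cinfinite t" and treg: "regularCard t"
    and ideal: "ideal_on r I"
    and ws: "weakly_saturated r I t" and ind: "indecomposable r I t"
    and C: "\<forall>i\<in>Field t. C i \<subseteq> Field r \<and> C i \<notin> I"
    and dec: "\<forall>i\<in>Field t. \<forall>j\<in>Field t. (i,j) \<in> t \<longrightarrow> C j \<subseteq> C i"
    and emp: "(\<Inter>i\<in>Field t. C i) = {}"
  shows False
proof -
  have ne: "Field t \<noteq> {}" using ti unfolding cinfinite_def by auto
  have step1: "\<exists>a\<in>Field t. (b,a) \<in> t \<and> C b - C a \<notin> I" if b: "b \<in> Field t" for b
  proof -
    define A where "A j = C b - C j" for j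
    have U: "(\<Union>j\<in>Field t. A j) = C b"
    proof
      show "(\<Union>j\<in>Field t. A j) \<subseteq> C b" unfolding A_def by auto
      show "C b \<subseteq> (\<Union>j\<in>Field t. A j)"
      proof
        fix x assume x: "x \<in> C b"
        then obtain j where "j \<in> Field t" "x \<notin> C j" using emp by blast
        then show "x \<in> (\<Union>j\<in>Field t. A j)" using x unfolding A_def by blast
      qed
    qed
    have "\<forall>i\<in>Field t. A i \<subseteq> Field r" using C b unfolding A_def by blast
    moreover have "(\<Union>j\<in>Field t. A j) \<notin> I" using U C b by simp
    ultimately obtain w where w: "w \<subseteq> Field t" "|w| <o t" "(\<Union>i\<in>w. A i) \<notin> I"
      using ind unfolding indecomposable_def by blast
    obtain a where a: "a \<in> Field t" "\<forall>k\<in>w. (k,a) \<in> t"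
      using t_bounded[OF tc treg w(1,2) ne] by blast
    have "(\<Union>i\<in>w. A i) \<subseteq> C b - C a"
      using a w(1) dec unfolding A_def by blast
    then have na: "C b - C a \<notin> I" using w(3) ideal_sub[OF ideal] by blast
    have "(b,a) \<in> t"
    proof (rule ccontr)
      assume "(b,a) \<notin> t"
      then have "(a,b) \<in> t" using t_total[OF tc b a(1)] by blast
      then have "C b - C a = {}" using dec a(1) b by blast
      then show False using na ideal_empty[OF ideal] by metis
    qed
    then show ?thesis using a na by blast
  qed
  define Good where "Good D \<longleftrightarrow> D \<subseteq> Field r \<and> D \<notin> I \<and> (\<exists>j\<in>Field t. D \<inter> C j = {})" for D
  define AA where "AA = {F. F \<subseteq> Collect Good \<and> pairwise disjnt F}"
  have "\<forall>Ch\<in>chains AA. \<Union>Ch \<in> AA"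
  proof
    fix Ch assume Ch: "Ch \<in> chains AA"
    then have "pairwise disjnt (\<Union>Ch)"
      by (intro pairwise_chain_Union[of Ch]) (auto simp: chains_def AA_def)
    moreover have "\<Union>Ch \<subseteq> Collect Good" using Ch by (auto simp: chains_def AA_def)
    ultimately show "\<Union>Ch \<in> AA" by (simp add: AA_def)
  qed
  then obtain M where M: "M \<in> AA" and Mmax: "\<forall>X\<in>AA. M \<subseteq> X \<longrightarrow> X = M"
    using Zorn_Lemma by blast
  have Mg: "\<And>D. D \<in> M \<Longrightarrow> Good D" and Md: "pairwise disjnt M" using M by (auto simp: AA_def)
  show False
  proof (cases "|M| <o t")
    case True
    obtain jf where jf: "\<And>D. D \<in> M \<Longrightarrow> jf D \<in> Field t \<and> D \<inter> C (jf D) = {}"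
      using Mg unfolding Good_def by metis
    have K: "jf ` M \<subseteq> Field t" using jf by blast
    have "|jf ` M| \<le>o |M|" by (rule card_of_image)
    then have "|jf ` M| <o t" using True ordLeq_ordLess_trans by blast
    then obtain b where b: "b \<in> Field t" "\<forall>k\<in>jf ` M. (k,b) \<in> t"
      using t_bounded[OF tc treg K _ ne] by blast
    obtain a where a: "a \<in> Field t" "(b,a) \<in> t" "C b - C a \<notin> I" using step1[OF b(1)] by blast
    define D' where "D' = C b - C a"
    have sub: "\<And>D. D \<in> M \<Longrightarrow> D' \<subseteq> C (jf D)"
      using b dec jf unfolding D'_def by blast
    have gD: "Good D'" unfolding Good_def D'_def using a C b(1) by blast
    have pw0: "\<forall>y. y \<in> M \<and> y \<noteq> D' \<longrightarrow> disjnt D' y \<and> disjnt y D'"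
    proof (intro allI impI)
      fix D assume D: "D \<in> M \<and> D \<noteq> D'"
      then have "D' \<inter> D = {}" using sub[of D] jf[of D] by blast
      then show "disjnt D' D \<and> disjnt D D'" by (auto simp: disjnt_def)
    qed
    have pw: "pairwise disjnt (insert D' M)"
      unfolding pairwise_insert using pw0 Md by blast
    have "insert D' M \<subseteq> Collect Good" using Mg gD by blast
    then have "insert D' M \<in> AA" unfolding AA_def using pw by blast
    then have "insert D' M = M" using Mmax by blast
    then have "D' \<in> M" by blast
    then have "D' = {}" using sub jf by blast
    then show False using a(3) ideal_empty[OF ideal] unfolding D'_def by metis
  next
    case False
    have "t \<le>o |M|"
      using False not_ordLess_iff_ordLeq[OF t_wo[OF tc] card_of_Well_order] by blast
    then have "|Field t| \<le>o |M|"
      by (rule ordIso_ordLeq_trans[OF card_of_Field_ordIso[OF tc]])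
    then obtain f where f: "inj_on f (Field t)" "f ` Field t \<subseteq> M"
      using card_of_ordLeq by metis
    obtain i0 where i0: "i0 \<in> Field t" using ne by blast
    define P where "P i = (if i = i0 then f i \<union> (Field r - (\<Union>j\<in>Field t. f j)) else f i)" for i
    have fg: "\<And>i. i \<in> Field t \<Longrightarrow> Good (f i)" using f Mg by blast
    have 1: "\<forall>i\<in>Field t. I_positive r I (P i)"
    proof
      fix i assume i: "i \<in> Field t"
      have "f i \<subseteq> P i" unfolding P_def by auto
      moreover have "P i \<subseteq> Field r" using fg i i0 unfolding P_def Good_def by auto
      moreover have "f i \<notin> I" using fg i unfolding Good_def by auto
      ultimately show "I_positive r I (P i)" unfolding I_positive_def
        using ideal_sub[OF ideal] by blast
    qed
    have fd: "\<And>i j. i \<in> Field t \<Longrightarrow> j \<in> Field t \<Longrightarrow> i \<noteq> j \<Longrightarrow> f i \<inter> f j = {}"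
    proof -
      fix i j assume "i \<in> Field t" "j \<in> Field t" "i \<noteq> j"
      then have "f i \<noteq> f j" "f i \<in> M" "f j \<in> M" using f by (auto simp: inj_on_def)
      then show "f i \<inter> f j = {}" using Md by (auto simp: pairwise_def disjnt_def)
    qed
    have Psub: "\<And>i. P i \<subseteq> f i \<union> (- (\<Union>j\<in>Field t. f j))" unfolding P_def by auto
    have Peq: "\<And>i. i \<noteq> i0 \<Longrightarrow> P i = f i" unfolding P_def by auto
    have 2: "\<forall>i\<in>Field t. \<forall>j\<in>Field t. i \<noteq> j \<longrightarrow> P i \<inter> P j = {}"
    proof (intro ballI impI)
      fix i j assume ij: "i \<in> Field t" "j \<in> Field t" "i \<noteq> j"
      show "P i \<inter> P j = {}"
      proof (cases "i = i0")
        case True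
        then have "j \<noteq> i0" using ij by simp
        then have "P j = f j" by (rule Peq)
        moreover have "f j \<subseteq> (\<Union>j\<in>Field t. f j)" using ij by blast
        ultimately show ?thesis using Psub[of i] fd[OF ij] by blast
      next
        case False
        then have "P i = f i" by (rule Peq)
        moreover have "f i \<subseteq> (\<Union>j\<in>Field t. f j)" using ij by blast
        ultimately show ?thesis using Psub[of j] fd[OF ij] by blast
      qed
    qed
    have 3: "(\<Union>i\<in>Field t. P i) = Field r"
      using fg i0 unfolding P_def Good_def by auto
    show False using ws 1 2 3 unfolding weakly_saturated_def by blast
  qed
qed

lemma t_antisym: "Card_order t \<Longrightarrow> (i,j) \<in> t \<Longrightarrow> (j,i) \<in> t \<Longrightarrow> i = j"
  by (metis t_wo wo_rel.ANTISYM wo_rel_def antisymD)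

theorem proposition2p3:
  fixes r :: "'a rel" and t :: "'b rel" and I :: "'a set set"
  assumes kappa: "Card_order r"
    and ideal: "ideal_on r I"
    and theta: "Card_order t" "Cinfinite t" "regularCard t"
  shows
    "(weakly_saturated r I t \<and> indecomposable r I t
       \<longleftrightarrow>
     (\<forall>B :: 'b \<Rightarrow> 'a set.
        (\<forall>i\<in>Field t. B i \<subseteq> Field r) \<and>
        (\<forall>i\<in>Field t. \<forall>j\<in>Field t. (i, j) \<in> t \<longrightarrow> B i \<subseteq> B j) \<longrightarrow>
        (\<exists>istar\<in>Field t. \<forall>i\<in>Field t. (istar, i) \<in> t \<longrightarrow>
             I_eq I (B i) (\<Union>j\<in>Field t. B j))))
     \<and>
     (weakly_saturated r I t \<and> indecomposable r I t
       \<longleftrightarrow>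
     (\<forall>A :: 'b \<Rightarrow> 'a set.
        (\<forall>i\<in>Field t. I_positive r I (A i)) \<longrightarrow>
        (\<Inter>i\<in>Field t. \<Union>j\<in>{j\<in>Field t. (i, j) \<in> t}. A j) \<noteq> {}))"
  (is "(?S1 \<longleftrightarrow> ?S2) \<and> (?S1 \<longleftrightarrow> ?S3)")
proof -
  have tc: "Card_order t" and ti: "Cinfinite t" and treg: "regularCard t" using theta by auto
  have ne: "Field t \<noteq> {}" using ti unfolding cinfinite_def by auto
  then obtain i0 where i0: "i0 \<in> Field t" by blast
  have h13: "?S3" if S1: "?S1"
  proof (intro allI impI)
    fix A :: "'b \<Rightarrow> 'a set"
    assume pos: "\<forall>i\<in>Field t. I_positive r I (A i)"
    show "(\<Inter>i\<in>Field t. \<Union>j\<in>{j\<in>Field t. (i, j) \<in> t}. A j) \<noteq> {}"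
    proof
      assume e: "(\<Inter>i\<in>Field t. \<Union>j\<in>{j\<in>Field t. (i, j) \<in> t}. A j) = {}"
      define C where "C i = (\<Union>j\<in>{j\<in>Field t. (i, j) \<in> t}. A j)" for i
      have C1: "\<forall>i\<in>Field t. C i \<subseteq> Field r \<and> C i \<notin> I"
      proof
        fix i assume i: "i \<in> Field t"
        have "C i \<subseteq> Field r" using pos unfolding C_def I_positive_def by blast
        moreover have "A i \<subseteq> C i" using i t_refl[OF tc i] unfolding C_def by blast
        moreover have "A i \<notin> I" using pos i unfolding I_positive_def by blast
        ultimately show "C i \<subseteq> Field r \<and> C i \<notin> I" using ideal_sub[OF ideal] by blast
      qed
      have C2: "\<forall>i\<in>Field t. \<forall>j\<in>Field t. (i,j) \<in> t \<longrightarrow> C j \<subseteq> C i"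
        unfolding C_def using t_trans[OF tc] by blast
      have C3: "(\<Inter>i\<in>Field t. C i) = {}" using e unfolding C_def .
      show False using key[OF tc ti treg ideal _ _ C1 C2 C3] S1 by blast
    qed
  qed
  have h31: "?S1" if S3: "?S3"
  proof
    show "weakly_saturated r I t"
      unfolding weakly_saturated_def
    proof
      assume "\<exists>P :: 'b \<Rightarrow> 'a set. (\<forall>i\<in>Field t. I_positive r I (P i)) \<and>
          (\<forall>i\<in>Field t. \<forall>j\<in>Field t. i \<noteq> j \<longrightarrow> P i \<inter> P j = {}) \<and>
          (\<Union>i\<in>Field t. P i) = Field r"
      then obtain P :: "'b \<Rightarrow> 'a set" where P1: "\<forall>i\<in>Field t. I_positive r I (P i)"
        and P2: "\<forall>i\<in>Field t. \<forall>j\<in>Field t. i \<noteq> j \<longrightarrow> P i \<inter> P j = {}" by blast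
      have "(\<Inter>i\<in>Field t. \<Union>j\<in>{j\<in>Field t. (i, j) \<in> t}. P j) \<noteq> {}"
        using mp[OF spec[OF S3, of P] P1] .
      then obtain x where x: "x \<in> (\<Inter>i\<in>Field t. \<Union>j\<in>{j\<in>Field t. (i, j) \<in> t}. P j)"
        by (meson ex_in_conv)
      then obtain j0 where j0: "j0 \<in> Field t" "x \<in> P j0" using i0 by blast
      obtain i where i: "i \<in> Field t" "(j0,i) \<in> t" "i \<noteq> j0" using t_nomax[OF tc ti j0(1)] by blast
      obtain j where j: "j \<in> Field t" "(i,j) \<in> t" "x \<in> P j" using x i(1) by blast
      have "j \<noteq> j0" using t_antisym[OF tc] i j by blast
      then show False using P2 j j0 by blast
    qed
    show "indecomposable r I t"
      unfolding indecomposable_def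
    proof (intro allI impI)
      fix A :: "'b \<Rightarrow> 'a set"
      assume a: "(\<forall>i\<in>Field t. A i \<subseteq> Field r) \<and> (\<Union>i\<in>Field t. A i) \<notin> I"
      show "\<exists>w. w \<subseteq> Field t \<and> (card_of w, t) \<in> ordLess \<and> (\<Union>i\<in>w. A i) \<notin> I"
      proof (rule ccontr)
        assume na: "\<not> ?thesis"
        have naw: "\<And>w. w \<subseteq> Field t \<Longrightarrow> (card_of w, t) \<in> ordLess \<Longrightarrow> (\<Union>i\<in>w. A i) \<in> I"
          using na by blast
        define U where "U = (\<Union>i\<in>Field t. A i)"
        define Bs where "Bs i = (\<Union>j\<in>{j\<in>Field t. (j,i) \<in> t}. A j)" for i
        define A' where "A' i = U - Bs i" for i
        have pos: "\<forall>i\<in>Field t. I_positive r I (A' i)"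
        proof
          fix i assume i: "i \<in> Field t"
          have "Bs i \<in> I" unfolding Bs_def using naw[OF _ t_initial[OF tc ti i]] by blast
          have "U \<subseteq> Bs i \<union> A' i" unfolding A'_def by blast
          moreover have "U \<notin> I" using a unfolding U_def by blast
          ultimately have "Bs i \<union> A' i \<notin> I" using ideal_sub[OF ideal] by blast
          then have "A' i \<notin> I" using ideal_un[OF ideal \<open>Bs i \<in> I\<close>] by blast
          moreover have "A' i \<subseteq> Field r" using a unfolding A'_def U_def by blast
          ultimately show "I_positive r I (A' i)" unfolding I_positive_def by blast
        qed
        have "(\<Inter>i\<in>Field t. \<Union>j\<in>{j\<in>Field t. (i, j) \<in> t}. A' j) \<noteq> {}"
          using mp[OF spec[OF S3, of A'] pos] .
        then obtain x where x: "x \<in> (\<Inter>i\<in>Field t. \<Union>j\<in>{j\<in>Field t. (i, j) \<in> t}. A' j)"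
          by (meson ex_in_conv)
        then have "x \<in> U" using i0 unfolding A'_def by blast
        then obtain k where k: "k \<in> Field t" "x \<in> A k" unfolding U_def by blast
        obtain j where j: "j \<in> Field t" "(k,j) \<in> t" "x \<in> A' j" using x k(1) by blast
        have "A k \<subseteq> Bs j" using k j unfolding Bs_def by blast
        then show False using j k unfolding A'_def by blast
      qed
    qed
  qed
  have h23: "?S3" if S2: "?S2"
  proof (intro allI impI)
    fix A :: "'b \<Rightarrow> 'a set"
    assume pos: "\<forall>i\<in>Field t. I_positive r I (A i)"
    show "(\<Inter>i\<in>Field t. \<Union>j\<in>{j\<in>Field t. (i, j) \<in> t}. A j) \<noteq> {}"
    proof
      assume e: "(\<Inter>i\<in>Field t. \<Union>j\<in>{j\<in>Field t. (i, j) \<in> t}. A j) = {}"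
      define C where "C i = (\<Union>j\<in>{j\<in>Field t. (i, j) \<in> t}. A j)" for i
      define B where "B i = Field r - C i" for i
      have B1: "\<forall>i\<in>Field t. B i \<subseteq> Field r" unfolding B_def by blast
      have B2: "\<forall>i\<in>Field t. \<forall>j\<in>Field t. (i, j) \<in> t \<longrightarrow> B i \<subseteq> B j"
        unfolding B_def C_def using t_trans[OF tc] by blast
      obtain istar where ist: "istar \<in> Field t"
        "\<forall>i\<in>Field t. (istar, i) \<in> t \<longrightarrow> I_eq I (B i) (\<Union>j\<in>Field t. B j)"
        using mp[OF spec[OF S2, of B] conjI[OF B1 B2]] by blast
      have UB: "(\<Union>j\<in>Field t. B j) = Field r"
      proof
        show "(\<Union>j\<in>Field t. B j) \<subseteq> Field r" using B1 by blast
        show "Field r \<subseteq> (\<Union>j\<in>Field t. B j)"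
        proof
          fix x assume x: "x \<in> Field r"
          have "x \<notin> (\<Inter>i\<in>Field t. C i)" using e unfolding C_def by simp
          then obtain j where "j \<in> Field t" "x \<notin> C j" by blast
          then show "x \<in> (\<Union>j\<in>Field t. B j)" using x unfolding B_def by blast
        qed
      qed
      have "I_eq I (B istar) (\<Union>j\<in>Field t. B j)" using ist t_refl[OF tc ist(1)] by blast
      then have "(\<Union>j\<in>Field t. B j) - B istar \<in> I" unfolding I_eq_def by blast
      then have "Field r - B istar \<in> I" unfolding UB .
      moreover have "A istar \<subseteq> Field r - B istar"
        using pos ist(1) t_refl[OF tc ist(1)] unfolding B_def C_def I_positive_def by blast
      moreover have "A istar \<notin> I" using pos ist(1) unfolding I_positive_def by blast
      ultimately show False using ideal_sub[OF ideal] by blast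
    qed
  qed
  have h32: "?S2" if S3: "?S3"
  proof (intro allI impI)
    fix B :: "'b \<Rightarrow> 'a set"
    assume B: "(\<forall>i\<in>Field t. B i \<subseteq> Field r) \<and>
        (\<forall>i\<in>Field t. \<forall>j\<in>Field t. (i, j) \<in> t \<longrightarrow> B i \<subseteq> B j)"
    define U where "U = (\<Union>j\<in>Field t. B j)"
    show "\<exists>istar\<in>Field t. \<forall>i\<in>Field t. (istar, i) \<in> t \<longrightarrow> I_eq I (B i) (\<Union>j\<in>Field t. B j)"
    proof (rule ccontr)
      assume na: "\<not> ?thesis"
      have pos: "\<forall>i\<in>Field t. I_positive r I (U - B i)"
      proof
        fix i assume i: "i \<in> Field t"
        obtain i' where i': "i' \<in> Field t" "(i,i') \<in> t" "\<not> I_eq I (B i') U"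
          using na i unfolding U_def by blast
        have "B i' - U = {}" using i' unfolding U_def by blast
        then have "B i' - U \<in> I" using ideal_empty[OF ideal] by metis
        then have "U - B i' \<notin> I" using i'(3) unfolding I_eq_def by blast
        moreover have "U - B i' \<subseteq> U - B i" using B i i' by blast
        ultimately have "U - B i \<notin> I" using ideal_sub[OF ideal] by blast
        moreover have "U - B i \<subseteq> Field r" using B unfolding U_def by blast
        ultimately show "I_positive r I (U - B i)" unfolding I_positive_def by blast
      qed
      have "(\<Inter>i\<in>Field t. \<Union>j\<in>{j\<in>Field t. (i, j) \<in> t}. (\<lambda>j. U - B j) j) \<noteq> {}"
        using mp[OF spec[OF S3, of "\<lambda>j. U - B j"] pos] .
      then obtain x where x: "x \<in> (\<Inter>i\<in>Field t. \<Union>j\<in>{j\<in>Field t. (i, j) \<in> t}. U - B j)"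
        by (meson ex_in_conv)
      then have "x \<in> U" using i0 by blast
      then obtain k where k: "k \<in> Field t" "x \<in> B k" unfolding U_def by blast
      obtain j where j: "j \<in> Field t" "(k,j) \<in> t" "x \<in> U - B j" using x k(1) by blast
      then show False using B k by blast
    qed
  qed
  have e1: "?S1 \<longleftrightarrow> ?S2"
  proof
    assume "?S1" then show "?S2" by (intro h32 h13)
  next
    assume "?S2" then show "?S1" by (intro h31 h23)
  qed
  have e2: "?S1 \<longleftrightarrow> ?S3"
  proof
    assume "?S1" then show "?S3" by (rule h13)
  next
    assume "?S3" then show "?S1" by (rule h31)
  qed
  show ?thesis using e1 e2 by (rule conjI)
qed

end
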